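(* Under the standing assumptions below, let $k\in P$ and let $x\in D_k$ be decomposable. Then $x$ can be written in terms of indecomposable elements: there exist finitely many $\ell_1,\dots,\ell_n\in P$ with $\ell_i<k$ and indecomposable elements $x_i\in M_{\ell_i}$ (i.e. $x_i\in M_{\ell_i}\setminus D_{\ell_i}$) such that $x=\sum_{i=1}^n t^{\,k-\ell_i}x_i$.
   Context: Standing assumptions: $R$ is a principal ideal domain; $P$ is a lattice with a compatible abelian group structure ($(P,+,0)$ abelian group, $a\le b\Rightarrow a+c\le b+c$). $U_0=\{s\in P:s\ge 0\}$, $R[U_0]$ the monoid ring (finite sums $\sum c_st^s$, $c_s\in R$), graded by $\deg(ct^s)=s$. $M=\bigoplus_{a\in P}M_a$ is a $P$-graded $R[U_0]$-module (persistence module) that is graded projective, with each $M_a$ a finitely generated $R$-module. For $r\in P$, $D_r=\sum_{q<r}t^{\,r-q}M_q\subseteq M_r$ (sum of the images of structure maps from degrees $q<r$). An element $x\in M_r$ is decomposable if $x\in D_r$ and indecomposable if $x\in M_r\setminus D_r$. *)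

theory Defs
  imports Complex_Main
begin

definition is_pid :: "'r::idom itself \<Rightarrow> bool" where
  "is_pid _ \<longleftrightarrow>
     (\<forall>I::'r set. (0 \<in> I \<and> (\<forall>x\<in>I. \<forall>y\<in>I. x + y \<in> I) \<and> (\<forall>x\<in>I. \<forall>r. r * x \<in> I))
        \<longrightarrow> (\<exists>a. I = {r * a | r. True}))"

text \<open>A P-graded R[U_0]-module (persistence module), given by its homogeneous pieces
  Mg a (R-submodules of an ambient R-module) and the structure maps
  tm a b = multiplication by t^(b-a) from Mg a to Mg b, for a \<le> b.\<close>
definition pers_module ::
  "('r::comm_ring_1 \<Rightarrow> 'm::ab_group_add \<Rightarrow> 'm) \<Rightarrow> ('p::ordered_ab_group_add \<Rightarrow> 'm set)
     \<Rightarrow> ('p \<Rightarrow> 'p \<Rightarrow> 'm \<Rightarrow> 'm) \<Rightarrow> bool" where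
  "pers_module smul Mg tm \<longleftrightarrow>
     module smul \<and>
     (\<forall>a. module.subspace smul (Mg a)) \<and>
     (\<forall>a b. a \<le> b \<longrightarrow>
        (\<forall>x\<in>Mg a. tm a b x \<in> Mg b) \<and>
        (\<forall>x\<in>Mg a. \<forall>y\<in>Mg a. tm a b (x + y) = tm a b x + tm a b y) \<and>
        (\<forall>r. \<forall>x\<in>Mg a. tm a b (smul r x) = smul r (tm a b x))) \<and>
     (\<forall>a. \<forall>x\<in>Mg a. tm a a x = x) \<and>
     (\<forall>a b c. a \<le> b \<longrightarrow> b \<le> c \<longrightarrow> (\<forall>x\<in>Mg a. tm b c (tm a b x) = tm a c x))"

definition pieces_fin_gen ::
  "('r::comm_ring_1 \<Rightarrow> 'm::ab_group_add \<Rightarrow> 'm) \<Rightarrow> ('p \<Rightarrow> 'm set) \<Rightarrow> bool" where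
  "pieces_fin_gen smul Mg \<longleftrightarrow>
     (\<forall>a. \<exists>S. finite S \<and> S \<subseteq> Mg a \<and> module.span smul S = Mg a)"

text \<open>Degree-a piece of the graded free R[U_0]-module with basis indexed by 'i,
  basis element j in degree d j: finitely supported coefficient vectors, supported on
  the j with d j \<le> a (the coefficient of j stands for the multiple of t^(a - d j) e_j);
  the structure maps of this free module are the identity on coefficient vectors.\<close>
definition free_piece :: "('i \<Rightarrow> 'p::order) \<Rightarrow> 'p \<Rightarrow> ('i \<Rightarrow> 'r::zero) set" where
  "free_piece d a = {c. finite {j. c j \<noteq> 0} \<and> (\<forall>j. c j \<noteq> 0 \<longrightarrow> d j \<le> a)}"

definition graded_projective ::
  "'i itself \<Rightarrow> ('r::comm_ring_1 \<Rightarrow> 'm::ab_group_add \<Rightarrow> 'm) \<Rightarrow> ('p::ordered_ab_group_add \<Rightarrow> 'm set)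
     \<Rightarrow> ('p \<Rightarrow> 'p \<Rightarrow> 'm \<Rightarrow> 'm) \<Rightarrow> bool" where
  "graded_projective _ smul Mg tm \<longleftrightarrow>
     (\<exists>(d :: 'i \<Rightarrow> 'p) (\<iota> :: 'p \<Rightarrow> 'm \<Rightarrow> ('i \<Rightarrow> 'r)) (\<pi> :: 'p \<Rightarrow> ('i \<Rightarrow> 'r) \<Rightarrow> 'm).
        (\<forall>a. \<forall>x\<in>Mg a. \<iota> a x \<in> free_piece d a) \<and>
        (\<forall>a. \<forall>x\<in>Mg a. \<forall>y\<in>Mg a. \<iota> a (x + y) = (\<lambda>j. \<iota> a x j + \<iota> a y j)) \<and>
        (\<forall>a r. \<forall>x\<in>Mg a. \<iota> a (smul r x) = (\<lambda>j. r * \<iota> a x j)) \<and>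
        (\<forall>a b. a \<le> b \<longrightarrow> (\<forall>x\<in>Mg a. \<iota> b (tm a b x) = \<iota> a x)) \<and>
        (\<forall>a. \<forall>c\<in>free_piece d a. \<pi> a c \<in> Mg a) \<and>
        (\<forall>a. \<forall>c\<in>free_piece d a. \<forall>c'\<in>free_piece d a.
            \<pi> a (\<lambda>j. c j + c' j) = \<pi> a c + \<pi> a c') \<and>
        (\<forall>a r. \<forall>c\<in>free_piece d a. \<pi> a (\<lambda>j. r * c j) = smul r (\<pi> a c)) \<and>
        (\<forall>a b. a \<le> b \<longrightarrow> (\<forall>c\<in>free_piece d a. \<pi> b c = tm a b (\<pi> a c))) \<and>
        (\<forall>a. \<forall>x\<in>Mg a. \<pi> a (\<iota> a x) = x))"

definition Dec ::
  "('r::comm_ring_1 \<Rightarrow> 'm::ab_group_add \<Rightarrow> 'm) \<Rightarrow> ('p::order \<Rightarrow> 'm set)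
     \<Rightarrow> ('p \<Rightarrow> 'p \<Rightarrow> 'm \<Rightarrow> 'm) \<Rightarrow> 'p \<Rightarrow> 'm set" where
  "Dec smul Mg tm r = module.span smul (\<Union>q\<in>{q. q < r}. tm q r ` Mg q)"

end

theory Submission
  imports Defs
begin

locale gp =
  fixes smul :: "'r::comm_ring_1 \<Rightarrow> 'm::ab_group_add \<Rightarrow> 'm"
    and Mg :: "'p::ordered_ab_group_add \<Rightarrow> 'm set"
    and tm :: "'p \<Rightarrow> 'p \<Rightarrow> 'm \<Rightarrow> 'm"
    and d :: "'i \<Rightarrow> 'p"
    and \<iota> :: "'p \<Rightarrow> 'm \<Rightarrow> ('i \<Rightarrow> 'r)"
    and \<pi> :: "'p \<Rightarrow> ('i \<Rightarrow> 'r) \<Rightarrow> 'm"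
  assumes md: "module smul"
    and sub: "\<And>a. module.subspace smul (Mg a)"
    and tm_in: "\<And>a b x. a \<le> b \<Longrightarrow> x \<in> Mg a \<Longrightarrow> tm a b x \<in> Mg b"
    and tm_add: "\<And>a b x y. a \<le> b \<Longrightarrow> x \<in> Mg a \<Longrightarrow> y \<in> Mg a \<Longrightarrow> tm a b (x+y) = tm a b x + tm a b y"
    and tm_id: "\<And>a x. x \<in> Mg a \<Longrightarrow> tm a a x = x"
    and tm_comp: "\<And>a b c x. a \<le> b \<Longrightarrow> b \<le> c \<Longrightarrow> x \<in> Mg a \<Longrightarrow> tm b c (tm a b x) = tm a c x"
    and i_in: "\<And>a x. x \<in> Mg a \<Longrightarrow> \<iota> a x \<in> free_piece d a"
    and i_add: "\<And>a x y. x \<in> Mg a \<Longrightarrow> y \<in> Mg a \<Longrightarrow> \<iota> a (x+y) = (\<lambda>j. \<iota> a x j + \<iota> a y j)"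
    and i_smul: "\<And>a r x. x \<in> Mg a \<Longrightarrow> \<iota> a (smul r x) = (\<lambda>j. r * \<iota> a x j)"
    and i_tm: "\<And>a b x. a \<le> b \<Longrightarrow> x \<in> Mg a \<Longrightarrow> \<iota> b (tm a b x) = \<iota> a x"
    and p_in: "\<And>a c. c \<in> free_piece d a \<Longrightarrow> \<pi> a c \<in> Mg a"
    and p_add: "\<And>a c c'. c \<in> free_piece d a \<Longrightarrow> c' \<in> free_piece d a \<Longrightarrow> \<pi> a (\<lambda>j. c j + c' j) = \<pi> a c + \<pi> a c'"
    and p_tm: "\<And>a b c. a \<le> b \<Longrightarrow> c \<in> free_piece d a \<Longrightarrow> \<pi> b c = tm a b (\<pi> a c)"
    and p_i: "\<And>a x. x \<in> Mg a \<Longrightarrow> \<pi> a (\<iota> a x) = x"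
begin

lemma M0: "0 \<in> Mg a"
  using module.subspace_0[OF md sub] .

lemma Madd: "x \<in> Mg a \<Longrightarrow> y \<in> Mg a \<Longrightarrow> x + y \<in> Mg a"
  using module.subspace_add[OF md sub] .

lemma Msum: "(\<And>c. c \<in> L \<Longrightarrow> g c \<in> Mg a) \<Longrightarrow> sum g L \<in> Mg a"
  using module.subspace_sum[OF md sub] by blast

lemma i0: "\<iota> a 0 j = 0"
proof -
  have "\<iota> a (0+0) = (\<lambda>j. \<iota> a 0 j + \<iota> a 0 j)" using i_add M0 by blast
  then have "\<iota> a 0 j = \<iota> a 0 j + \<iota> a 0 j" by (metis add_0)
  then show ?thesis by simp
qed

lemma fp0: "(\<lambda>j. 0::'r) \<in> free_piece d a"
  by (simp add: free_piece_def)

lemma fp_add: "(c::'i\<Rightarrow>'r) \<in> free_piece d a \<Longrightarrow> c' \<in> free_piece d a \<Longrightarrow> (\<lambda>j. c j + c' j) \<in> free_piece d a"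
proof -
  assume a1: "c \<in> free_piece d a" and a2: "c' \<in> free_piece d a"
  have "{j. c j + c' j \<noteq> 0} \<subseteq> {j. c j \<noteq> 0} \<union> {j. c' j \<noteq> 0}" by (auto simp del: add_0)
  moreover have "finite ({j. c j \<noteq> 0} \<union> {j. c' j \<noteq> 0})" using a1 a2 by (simp add: free_piece_def)
  ultimately have "finite {j. c j + c' j \<noteq> 0}" by (rule finite_subset)
  moreover have "\<forall>j. c j + c' j \<noteq> 0 \<longrightarrow> d j \<le> a"
    using a1 a2 unfolding free_piece_def by (metis (mono_tags, lifting) add.left_neutral add_0 mem_Collect_eq)
  ultimately show ?thesis by (simp add: free_piece_def)
qed

lemma fp_mono: "a \<le> b \<Longrightarrow> (c::'i\<Rightarrow>'r) \<in> free_piece d a \<Longrightarrow> c \<in> free_piece d b"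
  unfolding free_piece_def using order_trans by blast

lemma p0: "\<pi> a (\<lambda>j. 0) = 0"
proof -
  have "\<pi> a (\<lambda>j. 0 + 0) = \<pi> a (\<lambda>j. 0) + \<pi> a (\<lambda>j. 0)" using p_add fp0 by blast
  then show ?thesis by simp
qed

lemma tm0: "a \<le> b \<Longrightarrow> tm a b 0 = 0"
proof -
  assume "a \<le> b"
  then have "tm a b (0+0) = tm a b 0 + tm a b 0" using tm_add M0 by blast
  then show ?thesis by simp
qed

lemma i_sum: "finite L \<Longrightarrow> (\<And>c. c \<in> L \<Longrightarrow> g c \<in> Mg a) \<Longrightarrow> \<iota> a (sum g L) = (\<lambda>j. \<Sum>c\<in>L. \<iota> a (g c) j)"
proof (induction L rule: finite_induct)
  case empty
  then show ?case by (auto simp: i0)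
next
  case (insert x F)
  have "sum g F \<in> Mg a" using insert by (intro Msum) auto
  then show ?case using insert i_add[of "g x" a "sum g F"] by auto
qed

lemma fp_sum: "finite L \<Longrightarrow> (\<And>c. c \<in> L \<Longrightarrow> (f c :: 'i\<Rightarrow>'r) \<in> free_piece d a) \<Longrightarrow> (\<lambda>j. \<Sum>c\<in>L. f c j) \<in> free_piece d a"
proof (induction L rule: finite_induct)
  case empty
  then show ?case using fp0 by simp
next
  case (insert x F)
  then show ?case using fp_add[of "f x" a "\<lambda>j. \<Sum>c\<in>F. f c j"] by auto
qed

lemma p_sum: "finite L \<Longrightarrow> (\<And>c. c \<in> L \<Longrightarrow> f c \<in> free_piece d a) \<Longrightarrow> \<pi> a (\<lambda>j. \<Sum>c\<in>L. f c j) = (\<Sum>c\<in>L. \<pi> a (f c))"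
proof (induction L rule: finite_induct)
  case empty
  then show ?case using p0 by simp
next
  case (insert x F)
  have "(\<lambda>j. \<Sum>c\<in>F. f c j) \<in> free_piece d a" using insert by (intro fp_sum) auto
  then show ?case using insert p_add[of "f x" a "\<lambda>j. \<Sum>c\<in>F. f c j"] by auto
qed

abbreviation "DD \<equiv> Dec smul Mg tm"

lemma Dec_supp: "z \<in> DD c \<Longrightarrow> z \<in> Mg c \<and> (\<forall>j. \<iota> c z j \<noteq> 0 \<longrightarrow> d j < c)"
proof -
  assume z: "z \<in> DD c"
  let ?T = "{z \<in> Mg c. \<forall>j. \<iota> c z j \<noteq> 0 \<longrightarrow> d j < c}"
  have "module.subspace smul ?T"
    unfolding module.subspace_def[OF md]
    using M0 Madd module.subspace_scale[OF md sub] by (auto simp: i0 i_add i_smul) (metis add.right_neutral, metis mult_zero_right)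
  moreover have "(\<Union>q\<in>{q. q < c}. tm q c ` Mg q) \<subseteq> ?T"
  proof
    fix z assume "z \<in> (\<Union>q\<in>{q. q < c}. tm q c ` Mg q)"
    then obtain q y where q: "q < c" "y \<in> Mg q" "z = tm q c y" by auto
    have "\<iota> c z = \<iota> q y" using q i_tm by auto
    moreover have "\<iota> q y \<in> free_piece d q" using q i_in by auto
    ultimately show "z \<in> ?T" using q tm_in unfolding free_piece_def
      by (auto intro: le_less_trans)
  qed
  ultimately have "DD c \<subseteq> ?T" unfolding Dec_def using module.span_minimal[OF md] by blast
  then show ?thesis using z by blast
qed

definition GG :: "('p \<Rightarrow> bool) \<Rightarrow> 'p \<Rightarrow> 'm set" where
  "GG R b = {sum_list (map (\<lambda>p. tm (fst p) b (snd p)) ys) | ys.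
      \<forall>p\<in>set ys. R (fst p) \<and> snd p \<in> Mg (fst p) \<and> snd p \<notin> DD (fst p)}"

lemma GG0: "0 \<in> GG R b"
  unfolding GG_def by (rule CollectI, rule exI[of _ "[]"]) simp

lemma GGadd: "x \<in> GG R b \<Longrightarrow> y \<in> GG R b \<Longrightarrow> x + y \<in> GG R b"
proof -
  assume "x \<in> GG R b" "y \<in> GG R b"
  then obtain xs ys where "\<forall>p\<in>set xs. R (fst p) \<and> snd p \<in> Mg (fst p) \<and> snd p \<notin> DD (fst p)"
    "x = sum_list (map (\<lambda>p. tm (fst p) b (snd p)) xs)"
    "\<forall>p\<in>set ys. R (fst p) \<and> snd p \<in> Mg (fst p) \<and> snd p \<notin> DD (fst p)"
    "y = sum_list (map (\<lambda>p. tm (fst p) b (snd p)) ys)"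
    unfolding GG_def by auto
  then show ?thesis unfolding GG_def
    by (intro CollectI exI[of _ "xs @ ys"]) auto
qed

lemma GGsum: "finite L \<Longrightarrow> (\<And>c. c \<in> L \<Longrightarrow> g c \<in> GG R b) \<Longrightarrow> sum g L \<in> GG R b"
  by (induction L rule: finite_induct) (auto intro: GG0 GGadd)

lemma GGsingle: "R c \<Longrightarrow> z \<in> Mg c \<Longrightarrow> z \<notin> DD c \<Longrightarrow> tm c b z \<in> GG R b"
  unfolding GG_def by (intro CollectI exI[of _ "[(c,z)]"]) auto

lemma tm_list:
  assumes "c \<le> b" "\<forall>p\<in>set ys. fst p \<le> c \<and> snd p \<in> Mg (fst p)"
  shows "sum_list (map (\<lambda>p. tm (fst p) c (snd p)) ys) \<in> Mg c \<and>
     tm c b (sum_list (map (\<lambda>p. tm (fst p) c (snd p)) ys)) = sum_list (map (\<lambda>p. tm (fst p) b (snd p)) ys)"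
  using assms(2)
proof (induction ys)
  case Nil
  then show ?case using tm0 assms(1) M0 by simp
next
  case (Cons p ys)
  have h: "tm (fst p) c (snd p) \<in> Mg c" using Cons tm_in by auto
  have "tm c b (tm (fst p) c (snd p)) = tm (fst p) b (snd p)"
    using Cons tm_comp assms(1) by auto
  then show ?case using Cons h Madd tm_add[OF assms(1)] by auto
qed

lemma GGtm: "y \<in> GG R c \<Longrightarrow> (\<And>l. R l \<Longrightarrow> l \<le> c) \<Longrightarrow> (\<And>l. R l \<Longrightarrow> R' l) \<Longrightarrow> c \<le> b
   \<Longrightarrow> tm c b y \<in> GG R' b"
proof -
  assume y: "y \<in> GG R c" and h1: "\<And>l. R l \<Longrightarrow> l \<le> c" and h2: "\<And>l. R l \<Longrightarrow> R' l" and cb: "c \<le> b"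
  then obtain ys where ys: "\<forall>p\<in>set ys. R (fst p) \<and> snd p \<in> Mg (fst p) \<and> snd p \<notin> DD (fst p)"
    "y = sum_list (map (\<lambda>p. tm (fst p) c (snd p)) ys)"
    unfolding GG_def by auto
  have "tm c b y = sum_list (map (\<lambda>p. tm (fst p) b (snd p)) ys)"
    using tm_list[OF cb, of ys] ys h1 by auto
  then show ?thesis using ys h2 unfolding GG_def by blast
qed

lemma decomp:
  assumes y: "y \<in> Mg b"
    and v_def: "v = \<iota> b y"
    and L_def: "L = d ` {j. v j \<noteq> 0}"
    and vc_def: "vc = (\<lambda>c j. if d j = c then v j else 0)"
  shows "finite L" "\<And>c. c \<in> L \<Longrightarrow> c \<le> b" "\<And>c. vc c \<in> free_piece d c"
    "y = (\<Sum>c\<in>L. tm c b (\<pi> c (vc c)))"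
    "\<And>j. v j = (\<Sum>c\<in>L. \<iota> c (\<pi> c (vc c)) j)"
proof -
  have vf: "v \<in> free_piece d b" using i_in y v_def by auto
  then show fL: "finite L" unfolding L_def free_piece_def by auto
  show Lb: "\<And>c. c \<in> L \<Longrightarrow> c \<le> b" using vf unfolding L_def free_piece_def by auto
  show vcf: "\<And>c. vc c \<in> free_piece d c"
  proof -
    fix c
    have "{j. vc c j \<noteq> 0} \<subseteq> {j. v j \<noteq> 0}" unfolding vc_def by auto
    then show "vc c \<in> free_piece d c" using vf unfolding free_piece_def
      by (auto intro: finite_subset simp: vc_def split: if_splits)
  qed
  have veq: "v = (\<lambda>j. \<Sum>c\<in>L. vc c j)"
  proof
    fix j
    show "v j = (\<Sum>c\<in>L. vc c j)"
    proof (cases "v j = 0")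
      case True
      then show ?thesis unfolding vc_def by (simp add: sum.neutral)
    next
      case False
      then have "d j \<in> L" unfolding L_def by auto
      then show ?thesis unfolding vc_def using fL by simp
    qed
  qed
  have "y = \<pi> b v" using p_i y v_def by simp
  also have "\<dots> = (\<Sum>c\<in>L. \<pi> b (vc c))"
    by (subst veq, rule p_sum[OF fL]) (auto intro: fp_mono[OF Lb vcf])
  also have "\<dots> = (\<Sum>c\<in>L. tm c b (\<pi> c (vc c)))"
    by (rule sum.cong) (auto intro: p_tm[OF Lb vcf])
  finally show yeq: "y = (\<Sum>c\<in>L. tm c b (\<pi> c (vc c)))" .
  fix j
  have "v = \<iota> b (\<Sum>c\<in>L. tm c b (\<pi> c (vc c)))" using yeq v_def by simp
  also have "\<dots> = (\<lambda>j. \<Sum>c\<in>L. \<iota> b (tm c b (\<pi> c (vc c))) j)"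
    by (rule i_sum[OF fL]) (auto intro: tm_in Lb p_in vcf)
  also have "\<dots> = (\<lambda>j. \<Sum>c\<in>L. \<iota> c (\<pi> c (vc c)) j)"
    by (intro ext sum.cong) (auto simp: i_tm Lb p_in vcf)
  finally show "v j = (\<Sum>c\<in>L. \<iota> c (\<pi> c (vc c)) j)" by simp
qed

lemma main:
  assumes fJ: "finite J" and hJ: "\<And>b y. b \<le> k \<Longrightarrow> y \<in> Mg b \<Longrightarrow> {j. \<iota> b y j \<noteq> 0} \<subseteq> J"
  shows "b \<le> k \<Longrightarrow> y \<in> Mg b \<Longrightarrow> y \<in> GG (\<lambda>l. l \<le> b) b"
proof (induction "card {j\<in>J. \<exists>i. \<iota> b y i \<noteq> 0 \<and> d j \<le> d i}" arbitrary: b y rule: less_induct)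
  case less
  define v where "v = \<iota> b y"
  define L where "L = d ` {j. v j \<noteq> 0}"
  define vc where "vc = (\<lambda>c j. if d j = c then v j else 0)"
  note D = decomp[OF less.prems(2) v_def L_def vc_def]
  have key: "\<pi> c (vc c) \<in> GG (\<lambda>l. l \<le> c) c" if cL: "c \<in> L" for c
  proof -
    obtain j0 where j0: "v j0 \<noteq> 0" "d j0 = c" using cL unfolding L_def by auto
    have cb: "c \<le> b" using D(2) cL .
    have yc: "\<pi> c (vc c) \<in> Mg c" using p_in D(3) .
    show ?thesis
    proof (cases "\<exists>i. v i \<noteq> 0 \<and> \<not> d i \<le> c")
      case True
      then obtain i where i: "v i \<noteq> 0" "\<not> d i \<le> c" by auto
      let ?A = "\<lambda>b y. {j\<in>J. \<exists>i. \<iota> b y i \<noteq> 0 \<and> d j \<le> d i}"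
      have sub1: "?A c (\<pi> c (vc c)) \<subseteq> {j\<in>J. d j \<le> c}"
      proof
        fix j assume "j \<in> ?A c (\<pi> c (vc c))"
        then obtain i where ji: "j \<in> J" "\<iota> c (\<pi> c (vc c)) i \<noteq> 0" "d j \<le> d i" by blast
        have "d i \<le> c" using i_in[OF yc] ji(2) unfolding free_piece_def by blast
        then show "j \<in> {j\<in>J. d j \<le> c}" using ji order_trans by blast
      qed
      have sub2: "{j\<in>J. d j \<le> c} \<subseteq> ?A b y" using j0 v_def by auto
      have iJ: "i \<in> J" using hJ[OF less.prems] i v_def by auto
      have iA: "i \<in> ?A b y" using iJ i v_def by auto
      have "i \<notin> {j\<in>J. d j \<le> c}" using i by auto
      then have ps: "?A c (\<pi> c (vc c)) \<subset> ?A b y" using sub1 sub2 iA by blast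
      have "finite (?A b y)" using fJ by auto
      then have "card (?A c (\<pi> c (vc c))) < card (?A b y)" using ps psubset_card_mono by blast
      moreover have "c \<le> k" using cb less.prems(1) by (rule order_trans)
      ultimately show ?thesis using less.hyps yc by blast
    next
      case False
      then have all: "\<forall>i. v i \<noteq> 0 \<longrightarrow> d i \<le> c" by auto
      have "\<pi> c (vc c) \<notin> DD c"
      proof
        assume dec: "\<pi> c (vc c) \<in> DD c"
        have "v j0 = (\<Sum>c'\<in>L. \<iota> c' (\<pi> c' (vc c')) j0)" using D(5) .
        also have "\<dots> = 0"
        proof (rule sum.neutral, rule ballI)
          fix c' assume c'L: "c' \<in> L"
          show "\<iota> c' (\<pi> c' (vc c')) j0 = 0"
          proof (cases "c' = c")
            case True then show ?thesis using Dec_supp[OF dec] j0 by auto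
          next
            case False
            have "c' \<le> c" using c'L all unfolding L_def by auto
            then have "\<not> c \<le> c'" using False by auto
            then show ?thesis using i_in[OF p_in[OF D(3)], of c'] j0 unfolding free_piece_def by auto
          qed
        qed
        finally show False using j0 by simp
      qed
      then have "tm c c (\<pi> c (vc c)) \<in> GG (\<lambda>l. l \<le> c) c" by (intro GGsingle) (auto simp: yc)
      then show ?thesis using tm_id yc by simp
    qed
  qed
  have "y = (\<Sum>c\<in>L. tm c b (\<pi> c (vc c)))" using D(4) .
  also have "\<dots> \<in> GG (\<lambda>l. l \<le> b) b"
  proof (rule GGsum[OF D(1)])
    fix c assume cL: "c \<in> L"
    show "tm c b (\<pi> c (vc c)) \<in> GG (\<lambda>l. l \<le> b) b"
      by (rule GGtm[OF key[OF cL]]) (use D(2)[OF cL] order_trans in blast)+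
  qed
  finally show ?case .
qed

lemma final:
  assumes fJ: "finite J" and hJ: "\<And>b y. b \<le> k \<Longrightarrow> y \<in> Mg b \<Longrightarrow> {j. \<iota> b y j \<noteq> 0} \<subseteq> J"
    and x: "x \<in> DD k"
  shows "x \<in> GG (\<lambda>l. l < k) k"
proof -
  have xM: "x \<in> Mg k" and sx: "\<forall>j. \<iota> k x j \<noteq> 0 \<longrightarrow> d j < k" using Dec_supp[OF x] by auto
  define v where "v = \<iota> k x"
  define L where "L = d ` {j. v j \<noteq> 0}"
  define vc where "vc = (\<lambda>c j. if d j = c then v j else 0)"
  note D = decomp[OF xM v_def L_def vc_def]
  have Lk: "c < k" if "c \<in> L" for c using that sx unfolding L_def v_def by auto
  have "x = (\<Sum>c\<in>L. tm c k (\<pi> c (vc c)))" using D(4) .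
  also have "\<dots> \<in> GG (\<lambda>l. l < k) k"
  proof (rule GGsum[OF D(1)])
    fix c assume cL: "c \<in> L"
    have "\<pi> c (vc c) \<in> GG (\<lambda>l. l \<le> c) c"
      using main[OF fJ hJ, of c] Lk[OF cL] p_in[OF D(3)] by auto
    then show "tm c k (\<pi> c (vc c)) \<in> GG (\<lambda>l. l < k) k"
      by (rule GGtm) (use Lk[OF cL] le_less_trans less_imp_le in blast)+
  qed
  finally show ?thesis .
qed

lemma finJ:
  assumes S: "finite S" "S \<subseteq> Mg k" "module.span smul S = Mg k"
  shows "\<exists>J. finite J \<and> (\<forall>b y. b \<le> k \<longrightarrow> y \<in> Mg b \<longrightarrow> {j. \<iota> b y j \<noteq> 0} \<subseteq> J)"
proof -
  define J where "J = (\<Union>s\<in>S. {j. \<iota> k s j \<noteq> 0})"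
  have fJ: "finite J" unfolding J_def
  proof (rule finite_UN_I[OF S(1)])
    fix s assume "s \<in> S"
    then have "\<iota> k s \<in> free_piece d k" using S(2) i_in by blast
    then show "finite {j. \<iota> k s j \<noteq> 0}" unfolding free_piece_def by simp
  qed
  let ?T = "{z \<in> Mg k. {j. \<iota> k z j \<noteq> 0} \<subseteq> J}"
  have "module.subspace smul ?T"
    unfolding module.subspace_def[OF md]
  proof (intro conjI ballI allI)
    show "0 \<in> ?T" using M0 by (simp add: i0)
  next
    fix x y assume x: "x \<in> ?T" and y: "y \<in> ?T"
    have "{j. \<iota> k (x + y) j \<noteq> 0} \<subseteq> {j. \<iota> k x j \<noteq> 0} \<union> {j. \<iota> k y j \<noteq> 0}"
    proof
      fix j assume "j \<in> {j. \<iota> k (x + y) j \<noteq> 0}"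
      then have "\<iota> k x j + \<iota> k y j \<noteq> 0" using i_add x y by simp
      then show "j \<in> {j. \<iota> k x j \<noteq> 0} \<union> {j. \<iota> k y j \<noteq> 0}" by (metis UnCI add.right_neutral mem_Collect_eq add.left_neutral)
    qed
    then show "x + y \<in> ?T" using x y Madd by blast
  next
    fix r x assume x: "x \<in> ?T"
    have "{j. \<iota> k (smul r x) j \<noteq> 0} \<subseteq> {j. \<iota> k x j \<noteq> 0}"
      using i_smul x by auto
    moreover have "smul r x \<in> Mg k" using module.subspace_scale[OF md sub] x by blast
    ultimately show "smul r x \<in> ?T" using x by blast
  qed
  moreover have "S \<subseteq> ?T" using S unfolding J_def by auto
  ultimately have "module.span smul S \<subseteq> ?T" using module.span_minimal[OF md] by blast
  then have MT: "Mg k \<subseteq> ?T" using S(3) by simp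
  have "{j. \<iota> b y j \<noteq> 0} \<subseteq> J" if "b \<le> k" "y \<in> Mg b" for b y
  proof -
    have "tm b k y \<in> Mg k" using tm_in that by blast
    then have "{j. \<iota> k (tm b k y) j \<noteq> 0} \<subseteq> J" using MT by blast
    then show ?thesis using i_tm that by simp
  qed
  then show ?thesis using fJ by blast
qed

end

theorem lemma4p5:
  fixes smul :: "'r::idom \<Rightarrow> 'm::ab_group_add \<Rightarrow> 'm"
    and Mg :: "'p::{lattice, ordered_ab_group_add} \<Rightarrow> 'm set"
    and tm :: "'p \<Rightarrow> 'p \<Rightarrow> 'm \<Rightarrow> 'm"
    and k :: 'p and x :: 'm
  assumes "is_pid TYPE('r)"
    and "pers_module smul Mg tm"
    and "graded_projective TYPE('i) smul Mg tm"
    and "pieces_fin_gen smul Mg"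
    and "x \<in> Dec smul Mg tm k"
  shows "\<exists>(n::nat) (l :: nat \<Rightarrow> 'p) (xs :: nat \<Rightarrow> 'm).
           (\<forall>i<n. l i < k \<and> xs i \<in> Mg (l i) \<and> xs i \<notin> Dec smul Mg tm (l i)) \<and>
           x = (\<Sum>i<n. tm (l i) k (xs i))"
proof -
  obtain d :: "'i \<Rightarrow> 'p" and \<iota> \<pi> where G:
     "(\<forall>a. \<forall>x\<in>Mg a. \<iota> a x \<in> free_piece d a) \<and>
        (\<forall>a. \<forall>x\<in>Mg a. \<forall>y\<in>Mg a. \<iota> a (x + y) = (\<lambda>j. \<iota> a x j + \<iota> a y j)) \<and>
        (\<forall>a r. \<forall>x\<in>Mg a. \<iota> a (smul r x) = (\<lambda>j. r * \<iota> a x j)) \<and>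
        (\<forall>a b. a \<le> b \<longrightarrow> (\<forall>x\<in>Mg a. \<iota> b (tm a b x) = \<iota> a x)) \<and>
        (\<forall>a. \<forall>c\<in>free_piece d a. \<pi> a c \<in> Mg a) \<and>
        (\<forall>a. \<forall>c\<in>free_piece d a. \<forall>c'\<in>free_piece d a.
            \<pi> a (\<lambda>j. c j + c' j) = \<pi> a c + \<pi> a c') \<and>
        (\<forall>a r. \<forall>c\<in>free_piece d a. \<pi> a (\<lambda>j. r * c j) = smul r (\<pi> a c)) \<and>
        (\<forall>a b. a \<le> b \<longrightarrow> (\<forall>c\<in>free_piece d a. \<pi> b c = tm a b (\<pi> a c))) \<and>
        (\<forall>a. \<forall>x\<in>Mg a. \<pi> a (\<iota> a x) = x)"
    using assms(3) unfolding graded_projective_def by (elim exE) (erule that)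
  note P = assms(2)[unfolded pers_module_def]
  interpret gp smul Mg tm d \<iota> \<pi>
    by (rule gp.intro[OF P[THEN conjunct1, rule_format] P[THEN conjunct2, THEN conjunct1, rule_format]
       P[THEN conjunct2, THEN conjunct2, THEN conjunct1, rule_format, THEN conjunct1, rule_format]
       P[THEN conjunct2, THEN conjunct2, THEN conjunct1, rule_format, THEN conjunct2, THEN conjunct1, rule_format]
       P[THEN conjunct2, THEN conjunct2, THEN conjunct2, THEN conjunct1, rule_format] P[THEN conjunct2, THEN conjunct2, THEN conjunct2, THEN conjunct2, rule_format]
       G[THEN conjunct1, rule_format] G[THEN conjunct2, THEN conjunct1, rule_format] G[THEN conjunct2, THEN conjunct2, THEN conjunct1, rule_format] G[THEN conjunct2, THEN conjunct2, THEN conjunct2, THEN conjunct1, rule_format] G[THEN conjunct2, THEN conjunct2, THEN conjunct2, THEN conjunct2, THEN conjunct1, rule_format] G[THEN conjunct2, THEN conjunct2, THEN conjunct2, THEN conjunct2, THEN conjunct2, THEN conjunct1, rule_format] G[THEN conjunct2, THEN conjunct2, THEN conjunct2, THEN conjunct2, THEN conjunct2, THEN conjunct2, THEN conjunct2, THEN conjunct1, rule_format] G[THEN conjunct2, THEN conjunct2, THEN conjunct2, THEN conjunct2, THEN conjunct2, THEN conjunct2, THEN conjunct2, THEN conjunct2, rule_format]])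
  obtain S where S: "finite S" "S \<subseteq> Mg k" "module.span smul S = Mg k"
    using assms(4)[unfolded pieces_fin_gen_def, rule_format, of k] by (elim exE conjE) (rule that)
  obtain J where J: "finite J" "\<forall>b y. b \<le> k \<longrightarrow> y \<in> Mg b \<longrightarrow> {j. \<iota> b y j \<noteq> 0} \<subseteq> J"
    using finJ[OF S] by (elim exE conjE) (rule that)
  have "x \<in> GG (\<lambda>l. l < k) k" using final[OF J(1) _ assms(5)] J(2) by simp
  then obtain ys where ys: "\<forall>p\<in>set ys. fst p < k \<and> snd p \<in> Mg (fst p) \<and> snd p \<notin> Dec smul Mg tm (fst p)"
    "x = sum_list (map (\<lambda>p. tm (fst p) k (snd p)) ys)"
    unfolding GG_def by (elim CollectE exE conjE) (rule that)
  have "x = (\<Sum>i<length ys. tm (fst (ys!i)) k (snd (ys!i)))"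
    using ys(2) by (simp add: sum_list_sum_nth atLeast0LessThan)
  moreover have "\<forall>i<length ys. fst (ys!i) < k \<and> snd (ys!i) \<in> Mg (fst (ys!i)) \<and> snd (ys!i) \<notin> Dec smul Mg tm (fst (ys!i))"
    using ys(1) by auto
  ultimately show ?thesis by (intro exI[of _ "length ys"] exI[of _ "\<lambda>i. fst (ys!i)"] exI[of _ "\<lambda>i. snd (ys!i)"]) simp
qed

end
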